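(* Let $V=[n]$, let $r:2^V\to\mathbb{R}_+$ be monotone, submodular and normalized ($r(\emptyset)=0$), and let $\mathbf{P}=\{\vec{x}\in\mathbb{R}^V:\vec{x}\ge 0,\ \vec{x}(S)\le r(S)\ \forall S\subseteq V\}$. Let $a,b,c\in\mathbb{R}^V_{\ge 0}$ be such that $a+c\in\mathbf{P}$, $b\in\mathbf{P}$, and $a\le b$ coordinate-wise. Then there exists a vector $d\in\mathbb{R}^V$ such that $0\le d\le c$, $b+d\in\mathbf{P}$, and $\|c-d\|_1\le\|b-a\|_1$.
   Context: $\vec{x}(S)=\sum_{i\in S}\vec{x}_i$. Inequalities between vectors are coordinate-wise. *)

theory Defs
  imports "HOL-Analysis.Analysis"
begin

text \<open>Ground set V = [n] = {1..n}; vectors in R^V are functions nat => real, only their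
values on V matter. x(S) = sum of x i over i in S.\<close>

definition monotone_set_fn :: "nat set \<Rightarrow> (nat set \<Rightarrow> real) \<Rightarrow> bool" where
  "monotone_set_fn V r \<longleftrightarrow> (\<forall>S T. S \<subseteq> T \<and> T \<subseteq> V \<longrightarrow> r S \<le> r T)"

definition submodular_set_fn :: "nat set \<Rightarrow> (nat set \<Rightarrow> real) \<Rightarrow> bool" where
  "submodular_set_fn V r \<longleftrightarrow>
     (\<forall>S T. S \<subseteq> V \<and> T \<subseteq> V \<longrightarrow> r (S \<union> T) + r (S \<inter> T) \<le> r S + r T)"

definition in_polytope :: "nat set \<Rightarrow> (nat set \<Rightarrow> real) \<Rightarrow> (nat \<Rightarrow> real) \<Rightarrow> bool" where
  "in_polytope V r x \<longleftrightarrow> (\<forall>i\<in>V. 0 \<le> x i) \<and> (\<forall>S. S \<subseteq> V \<longrightarrow> (\<Sum>i\<in>S. x i) \<le> r S)"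

definition l1_dist :: "nat set \<Rightarrow> (nat \<Rightarrow> real) \<Rightarrow> (nat \<Rightarrow> real) \<Rightarrow> real" where
  "l1_dist V x y = (\<Sum>i\<in>V. \<bar>x i - y i\<bar>)"

end

theory Submission
  imports Defs
begin

lemma sum_upd_add:
  fixes x :: "nat \<Rightarrow> real"
  assumes "finite S"
  shows "sum (x(i := x i + t)) S = sum x S + (if i \<in> S then t else 0)"
proof -
  have "sum (x(i := x i + t)) S = sum (\<lambda>j. x j + (if j = i then t else 0)) S"
    by (rule sum.cong) auto
  also have "\<dots> = sum x S + sum (\<lambda>j. if j = i then t else 0) S"
    by (simp add: sum.distrib)
  also have "\<dots> = sum x S + (if i \<in> S then t else 0)"
    using assms by (simp add: sum.delta)
  finally show ?thesis .
qed

lemma tight_Un: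
  fixes x :: "nat \<Rightarrow> real"
  assumes fin: "finite V" and sub: "submodular_set_fn V r"
    and pol: "\<forall>S. S \<subseteq> V \<longrightarrow> sum x S \<le> r S"
    and S: "S \<subseteq> V" "sum x S = r S" and T: "T \<subseteq> V" "sum x T = r T"
  shows "sum x (S \<union> T) = r (S \<union> T)"
proof -
  have fS: "finite S" "finite T" using S T fin finite_subset by auto
  have e: "sum x (S \<union> T) + sum x (S \<inter> T) = sum x S + sum x T"
    using fS by (rule sum.union_inter)
  have "r (S \<union> T) + r (S \<inter> T) \<le> r S + r T" using sub S T unfolding submodular_set_fn_def by blast
  moreover have "sum x (S \<union> T) \<le> r (S \<union> T)" using pol S T by auto
  moreover have "sum x (S \<inter> T) \<le> r (S \<inter> T)"
  proof -
    have "S \<inter> T \<subseteq> V" using S by auto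
    then show ?thesis using pol by blast
  qed
  ultimately show ?thesis using e S T by linarith
qed

lemma tight_Union:
  fixes x :: "nat \<Rightarrow> real"
  assumes fin: "finite V" and sub: "submodular_set_fn V r" and r0: "r {} = 0"
    and pol: "\<forall>S. S \<subseteq> V \<longrightarrow> sum x S \<le> r S"
    and F: "finite F" "\<forall>S\<in>F. S \<subseteq> V \<and> sum x S = r S"
  shows "\<Union>F \<subseteq> V \<and> sum x (\<Union>F) = r (\<Union>F)"
  using F
proof (induction F rule: finite_induct)
  case empty
  then show ?case using r0 by simp
next
  case (insert S F)
  have h1: "\<Union>F \<subseteq> V" "sum x (\<Union>F) = r (\<Union>F)" using insert.IH insert.prems by auto
  have h2: "S \<subseteq> V" "sum x S = r S" using insert.prems by auto
  have "sum x (S \<union> \<Union>F) = r (S \<union> \<Union>F)"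
    by (rule tight_Un[OF fin sub pol h2 h1])
  then show ?case using h1 h2 by simp
qed

lemma greedy:
  fixes r :: "nat set \<Rightarrow> real" and b c :: "nat \<Rightarrow> real"
  assumes fin: "finite V" and U: "U \<subseteq> V"
    and pb: "in_polytope V r b" and c0: "\<forall>i\<in>V. 0 \<le> c i"
  shows "\<exists>d. (\<forall>i\<in>V. 0 \<le> d i \<and> d i \<le> c i) \<and> in_polytope V r (\<lambda>i. b i + d i)
     \<and> (\<forall>i\<in>U. d i = c i \<or> (\<exists>S. S \<subseteq> V \<and> i \<in> S \<and> sum (\<lambda>j. b j + d j) S = r S))"
proof -
  have fU: "finite U" using fin U finite_subset by blast
  show ?thesis using fU U
  proof (induction U rule: finite_subset_induct)
    case empty
    show ?case
      by (rule exI[of _ "\<lambda>_. 0"]) (use pb c0 in auto)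
  next
    case (insert i F)
    then obtain d where d1: "\<forall>i\<in>V. 0 \<le> d i \<and> d i \<le> c i"
      and d2: "in_polytope V r (\<lambda>i. b i + d i)"
      and d3: "\<forall>i\<in>F. d i = c i \<or> (\<exists>S. S \<subseteq> V \<and> i \<in> S \<and> sum (\<lambda>j. b j + d j) S = r S)"
      by blast
    define x where "x = (\<lambda>j. b j + d j)"
    define A where "A = {S. S \<subseteq> V \<and> i \<in> S}"
    define M where "M = Min ((\<lambda>S. r S - sum x S) ` A)"
    define t where "t = min (c i - d i) M"
    define d' where "d' = d(i := d i + t)"
    have xd': "(\<lambda>j. b j + d' j) = x(i := x i + t)"
      unfolding d'_def x_def by auto
    have finA: "finite A" by (rule finite_subset[of _ "Pow V"]) (use fin in \<open>auto simp: A_def\<close>)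
    have neA: "A \<noteq> {}" unfolding A_def using insert.hyps(2) by auto
    have pol: "\<forall>S. S \<subseteq> V \<longrightarrow> sum x S \<le> r S" using d2 unfolding in_polytope_def x_def by auto
    have M0: "0 \<le> M" unfolding M_def using finA neA pol by (auto simp: A_def)
    have Mle: "M \<le> r S - sum x S" if "S \<in> A" for S
      unfolding M_def using finA that by auto
    have "M \<in> (\<lambda>S. r S - sum x S) ` A"
      unfolding M_def using finA neA by (intro Min_in) auto
    then obtain S0 where S0: "S0 \<in> A" "M = r S0 - sum x S0" by blast
    have t0: "0 \<le> t" using M0 d1 insert.hyps(2) unfolding t_def by auto
    have newpol: "sum (x(i := x i + t)) S \<le> r S" if "S \<subseteq> V" for S
    proof -
      have fS: "finite S" using that fin finite_subset by blast
      show ?thesis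
      proof (cases "i \<in> S")
        case True
        then have "S \<in> A" using that A_def by auto
        then have "t \<le> r S - sum x S" using Mle[of S] unfolding t_def by linarith
        then show ?thesis using sum_upd_add[OF fS] True by simp
      next
        case False
        then show ?thesis using sum_upd_add[OF fS] pol that by simp
      qed
    qed
    have mono: "sum x S \<le> sum (x(i := x i + t)) S" if "S \<subseteq> V" for S
    proof -
      have fS: "finite S" using that fin finite_subset by blast
      show ?thesis using sum_upd_add[OF fS, of x i t] t0 by (simp del: fun_upd_apply)
    qed
    show ?case
    proof (intro exI[of _ d'] conjI)
      show "\<forall>j\<in>V. 0 \<le> d' j \<and> d' j \<le> c j"
        using d1 t0 unfolding d'_def t_def by auto
      show "in_polytope V r (\<lambda>j. b j + d' j)"
        unfolding in_polytope_def xd' using newpol d2 t0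
        unfolding in_polytope_def x_def by auto
      show "\<forall>j\<in>insert i F. d' j = c j \<or> (\<exists>S. S \<subseteq> V \<and> j \<in> S \<and> sum (\<lambda>j. b j + d' j) S = r S)"
      proof
        fix j assume j: "j \<in> insert i F"
        show "d' j = c j \<or> (\<exists>S. S \<subseteq> V \<and> j \<in> S \<and> sum (\<lambda>j. b j + d' j) S = r S)"
        proof (cases "j = i")
          case True
          show ?thesis
          proof (cases "t = c i - d i")
            case True
            then show ?thesis using \<open>j = i\<close> unfolding d'_def by simp
          next
            case False
            then have "t = M" unfolding t_def by linarith
            moreover have "S0 \<subseteq> V" "i \<in> S0" using S0 A_def by auto
            moreover have "finite S0" using \<open>S0 \<subseteq> V\<close> fin finite_subset by blast
            ultimately have "sum (x(i := x i + t)) S0 = r S0"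
              using sum_upd_add[of S0 x i t] S0 by (simp del: fun_upd_apply)
            then have "sum (\<lambda>j. b j + d' j) S0 = r S0" by (simp only: xd')
            then show ?thesis using \<open>S0 \<subseteq> V\<close> \<open>i \<in> S0\<close> True by blast
          qed
        next
          case False
          then have jF: "j \<in> F" using j by auto
          then show ?thesis
          proof (cases "d j = c j")
            case True
            then show ?thesis using False unfolding d'_def by simp
          next
            case False
            then obtain S where S: "S \<subseteq> V" "j \<in> S" "sum x S = r S"
              using d3 jF unfolding x_def by blast
            then have "sum (x(i := x i + t)) S = r S"
              using mono[OF S(1)] newpol[OF S(1)] by linarith
            then have "sum (\<lambda>j. b j + d' j) S = r S" by (simp only: xd')
            then show ?thesis using S by blast
          qed
        qed
      qed
    qed
  qed
qed

theorem lemma3p1: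
  fixes n :: nat and r :: "nat set \<Rightarrow> real" and a b c :: "nat \<Rightarrow> real"
  assumes "\<forall>S. S \<subseteq> {1..n} \<longrightarrow> 0 \<le> r S"
    and "monotone_set_fn {1..n} r"
    and "submodular_set_fn {1..n} r"
    and "r {} = 0"
    and "\<forall>i\<in>{1..n}. 0 \<le> a i \<and> 0 \<le> b i \<and> 0 \<le> c i"
    and "in_polytope {1..n} r (\<lambda>i. a i + c i)"
    and "in_polytope {1..n} r b"
    and "\<forall>i\<in>{1..n}. a i \<le> b i"
  shows "\<exists>d :: nat \<Rightarrow> real. (\<forall>i\<in>{1..n}. 0 \<le> d i \<and> d i \<le> c i)
           \<and> in_polytope {1..n} r (\<lambda>i. b i + d i)
           \<and> l1_dist {1..n} c d \<le> l1_dist {1..n} b a"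
proof -
  define V where "V = {1..n::nat}"
  have fin: "finite V" unfolding V_def by simp
  obtain d where d1: "\<forall>i\<in>V. 0 \<le> d i \<and> d i \<le> c i"
      and d2: "in_polytope V r (\<lambda>i. b i + d i)"
      and d3: "\<forall>i\<in>V. d i = c i \<or> (\<exists>S. S \<subseteq> V \<and> i \<in> S \<and> sum (\<lambda>j. b j + d j) S = r S)"
    using greedy[OF fin order_refl, of r b c] assms(5,7) unfolding V_def by blast
  define x where "x = (\<lambda>j. b j + d j)"
  define F where "F = {S. S \<subseteq> V \<and> sum x S = r S}"
  define T where "T = \<Union>F"
  have finF: "finite F" by (rule finite_subset[of _ "Pow V"]) (use fin in \<open>auto simp: F_def\<close>)
  have pol: "\<forall>S. S \<subseteq> V \<longrightarrow> sum x S \<le> r S" using d2 unfolding in_polytope_def x_def by auto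
  have T: "T \<subseteq> V" "sum x T = r T"
    using tight_Union[OF fin _ assms(4) pol finF] assms(3) unfolding T_def F_def V_def by auto
  have outT: "d i = c i" if "i \<in> V - T" for i
    using d3 that unfolding T_def F_def x_def by blast
  have finT: "finite T" using T fin finite_subset by blast
  have "l1_dist V c d = sum (\<lambda>i. c i - d i) V"
    unfolding l1_dist_def using d1 by (intro sum.cong) auto
  also have "\<dots> = sum (\<lambda>i. c i - d i) T + sum (\<lambda>i. c i - d i) (V - T)"
    using T(1) fin by (metis add.commute sum.subset_diff)
  also have "sum (\<lambda>i. c i - d i) (V - T) = 0"
    using outT by (intro sum.neutral) auto
  also have "sum (\<lambda>i. c i - d i) T = sum c T - sum d T" by (simp add: sum_subtractf)
  also have "\<dots> \<le> sum b T - sum a T"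
  proof -
    have "sum (\<lambda>i. a i + c i) T \<le> r T" using assms(6) T(1) unfolding in_polytope_def V_def by auto
    then show ?thesis using T(2) unfolding x_def by (simp add: sum.distrib)
  qed
  also have "\<dots> = sum (\<lambda>i. b i - a i) T" by (simp add: sum_subtractf)
  also have "\<dots> \<le> sum (\<lambda>i. b i - a i) V"
    using T(1) fin assms(8) unfolding V_def by (intro sum_mono2) auto
  also have "\<dots> = l1_dist V b a"
    unfolding l1_dist_def using assms(8) unfolding V_def by (intro sum.cong) auto
  finally have "l1_dist V c d \<le> l1_dist V b a" by simp
  then show ?thesis using d1 d2 unfolding V_def by blast
qed

end
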